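(* There exists an NJ-symmetric ring $R$ such that the polynomial ring $R[x]$ is not NJ-symmetric.
   Context: Rings are associative with identity. $N(S)$ is the set of nilpotent elements, $J(S)$ the Jacobson radical of a ring $S$. $S$ is NJ-symmetric if for all $a,b,c\in S$, $abc\in N(S)$ implies $bac\in J(S)$. *)

theory Defs
  imports "HOL-Algebra.UnivPoly"
begin

definition nilpotents :: "('a, 'm) ring_scheme \<Rightarrow> 'a set" where
  "nilpotents R = {a \<in> carrier R. \<exists>n::nat. a [^]\<^bsub>R\<^esub> n = \<zero>\<^bsub>R\<^esub>}"

definition left_ideal :: "'a set \<Rightarrow> ('a, 'm) ring_scheme \<Rightarrow> bool" where
  "left_ideal I R \<longleftrightarrow> additive_subgroup I R \<and>
     (\<forall>r \<in> carrier R. \<forall>a \<in> I. r \<otimes>\<^bsub>R\<^esub> a \<in> I)"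

definition maximal_left_ideal :: "'a set \<Rightarrow> ('a, 'm) ring_scheme \<Rightarrow> bool" where
  "maximal_left_ideal I R \<longleftrightarrow> left_ideal I R \<and> I \<noteq> carrier R \<and>
     (\<forall>K. left_ideal K R \<and> I \<subseteq> K \<and> K \<noteq> carrier R \<longrightarrow> K = I)"

definition jacobson_radical :: "('a, 'm) ring_scheme \<Rightarrow> 'a set" where
  "jacobson_radical R = carrier R \<inter> \<Inter> {I. maximal_left_ideal I R}"

definition NJ_symmetric :: "('a, 'm) ring_scheme \<Rightarrow> bool" where
  "NJ_symmetric R \<longleftrightarrow> (\<forall>a \<in> carrier R. \<forall>b \<in> carrier R. \<forall>c \<in> carrier R.
     a \<otimes>\<^bsub>R\<^esub> b \<otimes>\<^bsub>R\<^esub> c \<in> nilpotents R \<longrightarrow>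
     b \<otimes>\<^bsub>R\<^esub> a \<otimes>\<^bsub>R\<^esub> c \<in> jacobson_radical R)"

end

theory Submission
  imports Defs "HOL-Library.Countable" "HOL-Algebra.QuotRing"
begin

lemma (in ring) left_idealI':
  assumes "I \<subseteq> carrier R" "I \<noteq> {}"
    "\<And>x y. x \<in> I \<Longrightarrow> y \<in> I \<Longrightarrow> x \<oplus> y \<in> I"
    "\<And>r x. r \<in> carrier R \<Longrightarrow> x \<in> I \<Longrightarrow> r \<otimes> x \<in> I"
  shows "left_ideal I R"
proof -
  have "subgroup I (add_monoid R)"
  proof (rule add.subgroupI)
    fix a assume a: "a \<in> I"
    then have "(\<ominus> \<one>) \<otimes> a \<in> I" using assms by auto
    moreover have "(\<ominus> \<one>) \<otimes> a = \<ominus> a" using a assms(1) l_minus by auto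
    ultimately have "\<ominus> a \<in> I" by simp
    then show "\<ominus> a \<in> I" .
  next
    show "I \<subseteq> carrier R" using assms by simp
  next
    show "I \<noteq> {}" by fact
  next
    fix a b assume "a \<in> I" "b \<in> I"
    then show "a \<oplus> b \<in> I" using assms by simp
  qed
  then show ?thesis unfolding left_ideal_def using assms additive_subgroupI by blast
qed

lemma (in ring) left_idealD:
  assumes "left_ideal I R"
  shows "I \<subseteq> carrier R" "\<zero> \<in> I" "\<And>x y. x \<in> I \<Longrightarrow> y \<in> I \<Longrightarrow> x \<oplus> y \<in> I"
    "\<And>x. x \<in> I \<Longrightarrow> \<ominus> x \<in> I"
    "\<And>r x. r \<in> carrier R \<Longrightarrow> x \<in> I \<Longrightarrow> r \<otimes> x \<in> I"
  using assms unfolding left_ideal_def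
  by (auto simp: additive_subgroup.a_subset additive_subgroup.zero_closed
      additive_subgroup.a_closed additive_subgroup.a_inv_closed)

lemma (in ring) left_ideal_one:
  assumes "left_ideal I R" "\<one> \<in> I" shows "I = carrier R"
proof -
  have "r \<in> I" if "r \<in> carrier R" for r
    using left_idealD(5)[OF assms(1) that assms(2)] that by simp
  then show ?thesis using left_idealD(1)[OF assms(1)] by blast
qed

lemma (in ring) m_sub_J:
  assumes m: "m \<subseteq> carrier R" "\<one> \<notin> m"
    "\<And>x y. x \<in> m \<Longrightarrow> y \<in> m \<Longrightarrow> x \<oplus> y \<in> m"
    "\<And>x r. x \<in> m \<Longrightarrow> r \<in> carrier R \<Longrightarrow> r \<otimes> x \<in> m"
    "\<And>x. x \<in> carrier R \<Longrightarrow> x \<notin> m \<Longrightarrow> \<exists>u\<in>carrier R. u \<otimes> x = \<one>"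
  and x: "x \<in> m"
  shows "x \<in> jacobson_radical R"
  unfolding jacobson_radical_def
proof (intro IntI InterI)
  show "x \<in> carrier R" using x m by auto
  fix M assume "M \<in> {I. maximal_left_ideal I R}"
  then have M: "left_ideal M R" "M \<noteq> carrier R"
    "\<And>K. left_ideal K R \<Longrightarrow> M \<subseteq> K \<Longrightarrow> K \<noteq> carrier R \<Longrightarrow> K = M"
    unfolding maximal_left_ideal_def by auto
  have xc: "x \<in> carrier R" using x m by auto
  note MD = left_idealD[OF M(1)]
  show "x \<in> M"
  proof (rule ccontr)
    assume xM: "x \<notin> M"
    define K where "K = {k \<oplus> r \<otimes> x | k r. k \<in> M \<and> r \<in> carrier R}"
    have KI: "left_ideal K R"
    proof (rule left_idealI')
      show "K \<subseteq> carrier R" unfolding K_def using MD(1) xc by auto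
      show "K \<noteq> {}" unfolding K_def using MD(2) by blast
      fix a b assume "a \<in> K" "b \<in> K"
      then obtain k1 r1 k2 r2 where ab: "a = k1 \<oplus> r1 \<otimes> x" "b = k2 \<oplus> r2 \<otimes> x"
        and kr: "k1 \<in> M" "k2 \<in> M" "r1 \<in> carrier R" "r2 \<in> carrier R" unfolding K_def by blast
      have kc: "k1 \<in> carrier R" "k2 \<in> carrier R" using MD(1) kr by auto
      have "a \<oplus> b = (k1 \<oplus> k2) \<oplus> (r1 \<oplus> r2) \<otimes> x"
        unfolding ab using xc kc kr(3,4) by (simp add: l_distr a_ac)
      moreover have "k1 \<oplus> k2 \<in> M" using MD(3) kr by blast
      moreover have "r1 \<oplus> r2 \<in> carrier R" using kr by blast
      ultimately show "a \<oplus> b \<in> K" unfolding K_def by blast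
    next
      fix s a assume s: "s \<in> carrier R" and "a \<in> K"
      then obtain k r where "a = k \<oplus> r \<otimes> x" "k \<in> M" "r \<in> carrier R" unfolding K_def by blast
      moreover then have "s \<otimes> a = s \<otimes> k \<oplus> (s \<otimes> r) \<otimes> x"
        using MD(1) xc s by (auto simp: r_distr m_assoc)
      ultimately show "s \<otimes> a \<in> K" unfolding K_def using MD(5) s by blast
    qed
    have "M \<subseteq> K"
    proof
      fix k assume "k \<in> M"
      then have "k = k \<oplus> \<zero> \<otimes> x" using MD(1) xc by auto
      then show "k \<in> K" unfolding K_def using \<open>k \<in> M\<close> by blast
    qed
    moreover have "x \<in> K" unfolding K_def using MD(2) xc
      by (intro CollectI exI[of _ \<zero>] exI[of _ \<one>]) auto
    ultimately have "K = carrier R" using M(3)[OF KI] xM by blast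
    then obtain k r where kr: "\<one> = k \<oplus> r \<otimes> x" "k \<in> M" "r \<in> carrier R"
    proof -
      have "\<one> \<in> K" using \<open>K = carrier R\<close> by simp
      then show ?thesis using that unfolding K_def by blast
    qed
    have kc: "k \<in> carrier R" using kr MD(1) by auto
    have "k \<notin> m"
    proof
      assume "k \<in> m"
      then have "k \<oplus> r \<otimes> x \<in> m" using m(3,4) x kr by auto
      then show False using kr m(2) by simp
    qed
    then obtain u where u: "u \<in> carrier R" "u \<otimes> k = \<one>" using m(5) kc by blast
    then have "\<one> \<in> M" using MD(5)[OF u(1) kr(2)] by simp
    then show False using left_ideal_one[OF M(1)] M(2) by blast
  qed
qed

lemma (in monoid) pow_left_inv:
  fixes k :: nat
  assumes "u \<in> carrier G" "y \<in> carrier G" "u \<otimes> y = \<one>"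
  shows "u [^] k \<otimes> y [^] k = \<one>"
proof (induction k)
  case 0 then show ?case by simp
next
  case (Suc k)
  have "u [^] Suc k \<otimes> y [^] Suc k = (u [^] k \<otimes> u) \<otimes> (y \<otimes> y [^] k)"
    using assms by (subst nat_pow_Suc2[OF assms(2)]) simp
  also have "\<dots> = u [^] k \<otimes> (u \<otimes> y) \<otimes> y [^] k"
    using assms(1,2) by (simp add: m_assoc)
  also have "\<dots> = \<one>" using assms Suc by simp
  finally show ?case .
qed

lemma (in ring) NJ_from_m:
  assumes m: "m \<subseteq> carrier R" "\<one> \<notin> m" "\<zero> \<in> m"
    "\<And>x y. x \<in> m \<Longrightarrow> y \<in> m \<Longrightarrow> x \<oplus> y \<in> m"
    "\<And>x r. x \<in> m \<Longrightarrow> r \<in> carrier R \<Longrightarrow> r \<otimes> x \<in> m"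
    "\<And>x r. x \<in> m \<Longrightarrow> r \<in> carrier R \<Longrightarrow> x \<otimes> r \<in> m"
    "\<And>x. x \<in> carrier R \<Longrightarrow> x \<notin> m \<Longrightarrow> \<exists>u\<in>carrier R. u \<otimes> x = \<one>"
    "\<And>x y. x \<in> carrier R \<Longrightarrow> y \<in> carrier R \<Longrightarrow> x \<notin> m \<Longrightarrow> y \<notin> m \<Longrightarrow> x \<otimes> y \<notin> m"
  shows "NJ_symmetric R"
  unfolding NJ_symmetric_def
proof (intro ballI impI)
  fix a b c assume abc: "a \<in> carrier R" "b \<in> carrier R" "c \<in> carrier R"
    and nil: "a \<otimes> b \<otimes> c \<in> nilpotents R"
  then obtain n :: nat where n: "(a \<otimes> b \<otimes> c) [^] n = \<zero>" unfolding nilpotents_def by blast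
  have "a \<otimes> b \<otimes> c \<in> m"
  proof (rule ccontr)
    assume "a \<otimes> b \<otimes> c \<notin> m"
    moreover have abcc: "a \<otimes> b \<otimes> c \<in> carrier R" using abc by simp
    ultimately obtain u where u: "u \<in> carrier R" "u \<otimes> (a \<otimes> b \<otimes> c) = \<one>" using m(7) by blast
    have "u [^] n \<otimes> (a \<otimes> b \<otimes> c) [^] n = \<one>" by (rule pow_left_inv[OF u(1) abcc u(2)])
    then have "\<one> = \<zero>" using n u(1) by (simp add: nat_pow_closed)
    then show False using m(2,3) by metis
  qed
  then have "a \<in> m \<or> b \<in> m \<or> c \<in> m"
  proof -
    assume h: "a \<otimes> b \<otimes> c \<in> m"
    show ?thesis
    proof (rule ccontr)
      assume "\<not> ?thesis"
      then have "a \<otimes> b \<notin> m" "c \<notin> m" using m(8)[of a b] abc by auto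
      then show False using m(8)[of "a \<otimes> b" c] abc h by auto
    qed
  qed
  moreover have "b \<otimes> a \<otimes> c \<in> m" if "a \<in> m" using m(5)[OF that abc(2)] m(6)[of "b \<otimes> a" c] abc by auto
  moreover have "b \<otimes> a \<otimes> c \<in> m" if "b \<in> m" using m(6)[OF that abc(1)] m(6)[of "b \<otimes> a" c] abc by auto
  moreover have "b \<otimes> a \<otimes> c \<in> m" if "c \<in> m" using m(5)[OF that, of "b \<otimes> a"] abc by auto
  ultimately have "b \<otimes> a \<otimes> c \<in> m" by blast
  then show "b \<otimes> a \<otimes> c \<in> jacobson_radical R" using m_sub_J[OF m(1,2,4,5,7)] by blast
qed

context UP_ring
begin

lemma coeff_mult_monom1:
  assumes p: "p \<in> carrier P" and a: "a \<in> carrier R"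
  shows "coeff P (p \<otimes>\<^bsub>P\<^esub> monom P a 1) k = (if k = 0 then \<zero> else coeff P p (k-1) \<otimes> a)"
proof (cases k)
  case 0 then show ?thesis using p a by simp
next
  case (Suc n)
  have "coeff P (p \<otimes>\<^bsub>P\<^esub> monom P a 1) k
      = (\<Oplus>i \<in> {..Suc n}. coeff P p i \<otimes> (if 1 = Suc n - i then a else \<zero>))"
    using p a Suc by simp
  also have "\<dots> = (\<Oplus>i \<in> {..Suc n}. (if n = i then coeff P p i \<otimes> a else \<zero>))"
    using p a by (intro R.finsum_cong') auto
  also have "\<dots> = coeff P p n \<otimes> a"
    using R.finsum_singleton[of n "{..Suc n}" "\<lambda>i. coeff P p i \<otimes> a"] p a by auto
  finally show ?thesis using Suc by simp
qed

lemma no_left_inv: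
  assumes y: "y \<in> carrier R" and ny: "\<And>n::nat. y [^] n \<noteq> \<zero>"
    and q: "q \<in> carrier P" and eq: "q \<otimes>\<^bsub>P\<^esub> (\<one>\<^bsub>P\<^esub> \<ominus>\<^bsub>P\<^esub> monom P y 1) = \<one>\<^bsub>P\<^esub>"
  shows False
proof -
  define mm where "mm = monom P y 1"
  have mmc: "mm \<in> carrier P" using y mm_def by simp
  have "q \<otimes>\<^bsub>P\<^esub> (\<one>\<^bsub>P\<^esub> \<ominus>\<^bsub>P\<^esub> mm) = q \<ominus>\<^bsub>P\<^esub> q \<otimes>\<^bsub>P\<^esub> mm"
    using q mmc by (simp add: P.minus_eq P.r_distr P.r_minus)
  then have e1: "q \<ominus>\<^bsub>P\<^esub> q \<otimes>\<^bsub>P\<^esub> mm = \<one>\<^bsub>P\<^esub>" using eq mm_def by simp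
  have qeq: "q = \<one>\<^bsub>P\<^esub> \<oplus>\<^bsub>P\<^esub> q \<otimes>\<^bsub>P\<^esub> mm"
  proof -
    have "\<one>\<^bsub>P\<^esub> \<oplus>\<^bsub>P\<^esub> q \<otimes>\<^bsub>P\<^esub> mm = (q \<ominus>\<^bsub>P\<^esub> q \<otimes>\<^bsub>P\<^esub> mm) \<oplus>\<^bsub>P\<^esub> q \<otimes>\<^bsub>P\<^esub> mm"
      using e1 by simp
    also have "\<dots> = q" using q mmc
      by (simp add: P.minus_eq P.a_assoc P.l_neg)
    finally show ?thesis by simp
  qed
  have ck: "coeff P q k = y [^] k" for k :: nat
  proof (induction k)
    case 0
    have "coeff P q 0 = coeff P (\<one>\<^bsub>P\<^esub> \<oplus>\<^bsub>P\<^esub> q \<otimes>\<^bsub>P\<^esub> mm) 0" by (rule arg_cong[OF qeq])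
    also have "\<dots> = \<one>" using q mmc y using coeff_mult_monom1[of q y] coeff_mult_monom1[of q y, simplified] by (simp add: mm_def del: coeff_mult)
    finally show ?case by simp
  next
    case (Suc k)
    have "coeff P q (Suc k) = coeff P (\<one>\<^bsub>P\<^esub> \<oplus>\<^bsub>P\<^esub> q \<otimes>\<^bsub>P\<^esub> mm) (Suc k)" by (rule arg_cong[OF qeq])
    also have "\<dots> = coeff P q k \<otimes> y" using q mmc y using coeff_mult_monom1[of q y] coeff_mult_monom1[of q y, simplified] by (simp add: mm_def del: coeff_mult)
    finally show ?case using Suc by simp
  qed
  have "coeff P q (Suc (deg R q)) = \<zero>" using deg_aboveD q by simp
  then show False using ck[of "Suc (deg R q)"] ny[of "Suc (deg R q)"] by simp
qed

end

context UP_ring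
begin

lemma not_in_J:
  assumes y: "y \<in> carrier R" and ny: "\<And>n::nat. y [^] n \<noteq> \<zero>"
  shows "monom P y 0 \<notin> jacobson_radical P"
proof
  assume zJ: "monom P y 0 \<in> jacobson_radical P"
  define w where "w = \<one>\<^bsub>P\<^esub> \<ominus>\<^bsub>P\<^esub> monom P y 1"
  have wc: "w \<in> carrier P" using y w_def by simp
  define A where "A = {I. left_ideal I P \<and> w \<in> I \<and> \<one>\<^bsub>P\<^esub> \<notin> I}"
  define I0 where "I0 = {q \<otimes>\<^bsub>P\<^esub> w | q. q \<in> carrier P}"
  have "I0 \<in> A" unfolding A_def
  proof (intro CollectI conjI)
    show "left_ideal I0 P"
    proof (rule P.left_idealI')
      show "I0 \<subseteq> carrier P" unfolding I0_def using wc by auto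
      show "I0 \<noteq> {}" unfolding I0_def using wc by blast
      fix a b assume "a \<in> I0" "b \<in> I0"
      then obtain q1 q2 where q: "a = q1 \<otimes>\<^bsub>P\<^esub> w" "b = q2 \<otimes>\<^bsub>P\<^esub> w" "q1 \<in> carrier P" "q2 \<in> carrier P"
        unfolding I0_def by blast
      then have "a \<oplus>\<^bsub>P\<^esub> b = (q1 \<oplus>\<^bsub>P\<^esub> q2) \<otimes>\<^bsub>P\<^esub> w" using wc by (simp add: P.l_distr)
      then show "a \<oplus>\<^bsub>P\<^esub> b \<in> I0" unfolding I0_def using q(3,4) by blast
    next
      fix s a assume s: "s \<in> carrier P" and "a \<in> I0"
      then obtain q where q: "a = q \<otimes>\<^bsub>P\<^esub> w" "q \<in> carrier P" unfolding I0_def by blast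
      then have "s \<otimes>\<^bsub>P\<^esub> a = (s \<otimes>\<^bsub>P\<^esub> q) \<otimes>\<^bsub>P\<^esub> w" using wc s by (simp add: P.m_assoc)
      then show "s \<otimes>\<^bsub>P\<^esub> a \<in> I0" unfolding I0_def using q(2) s by blast
    qed
    show "w \<in> I0" unfolding I0_def using wc by (intro CollectI exI[of _ "\<one>\<^bsub>P\<^esub>"]) simp
    show "\<one>\<^bsub>P\<^esub> \<notin> I0"
    proof
      assume "\<one>\<^bsub>P\<^esub> \<in> I0"
      then obtain q where "q \<in> carrier P" "q \<otimes>\<^bsub>P\<^esub> w = \<one>\<^bsub>P\<^esub>" unfolding I0_def by auto
      then show False using no_left_inv[OF y ny] w_def by blast
    qed
  qed
  then have "A \<noteq> {}" by blast
  moreover have "\<Union>C \<in> A" if C: "C \<noteq> {}" "subset.chain A C" for C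
  proof -
    have CA: "C \<subseteq> A" and ch: "\<And>X Y. X \<in> C \<Longrightarrow> Y \<in> C \<Longrightarrow> X \<subseteq> Y \<or> Y \<subseteq> X"
      using C(2) unfolding subset_chain_def by auto
    have LI: "\<And>I. I \<in> C \<Longrightarrow> left_ideal I P" and wI: "\<And>I. I \<in> C \<Longrightarrow> w \<in> I"
      and oI: "\<And>I. I \<in> C \<Longrightarrow> \<one>\<^bsub>P\<^esub> \<notin> I"
      using CA unfolding A_def by auto
    have "left_ideal (\<Union>C) P"
    proof (rule P.left_idealI')
      show "\<Union>C \<subseteq> carrier P" using P.left_idealD(1)[OF LI] by blast
      show "\<Union>C \<noteq> {}" using C(1) wI by blast
      fix a b assume "a \<in> \<Union>C" "b \<in> \<Union>C"
      then obtain X Y where XY: "X \<in> C" "Y \<in> C" "a \<in> X" "b \<in> Y" by blast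
      show "a \<oplus>\<^bsub>P\<^esub> b \<in> \<Union>C"
      proof (cases "X \<subseteq> Y")
        case True
        then have "a \<oplus>\<^bsub>P\<^esub> b \<in> Y" using P.left_idealD(3)[OF LI[OF XY(2)]] XY by blast
        then show ?thesis using XY by blast
      next
        case False
        then have "Y \<subseteq> X" using ch XY by blast
        then have "a \<oplus>\<^bsub>P\<^esub> b \<in> X" using P.left_idealD(3)[OF LI[OF XY(1)]] XY by blast
        then show ?thesis using XY by blast
      qed
    next
      fix s a assume s: "s \<in> carrier P" and "a \<in> \<Union>C"
      then obtain X where X: "X \<in> C" "a \<in> X" by blast
      then have "s \<otimes>\<^bsub>P\<^esub> a \<in> X" using P.left_idealD(5)[OF LI[OF X(1)] s] by blast
      then show "s \<otimes>\<^bsub>P\<^esub> a \<in> \<Union>C" using X by blast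
    qed
    moreover have "w \<in> \<Union>C" using C(1) wI by blast
    moreover have "\<one>\<^bsub>P\<^esub> \<notin> \<Union>C" using oI by blast
    ultimately show ?thesis unfolding A_def by blast
  qed
  ultimately obtain M where M: "M \<in> A" and Mmax: "\<And>X. X \<in> A \<Longrightarrow> M \<subseteq> X \<Longrightarrow> X = M"
    using subset_Zorn_nonempty[of A] by blast
  have LM: "left_ideal M P" and wM: "w \<in> M" and oM: "\<one>\<^bsub>P\<^esub> \<notin> M" using M unfolding A_def by auto
  have "maximal_left_ideal M P" unfolding maximal_left_ideal_def
  proof (intro conjI allI impI)
    show "left_ideal M P" by fact
    show "M \<noteq> carrier P" using oM by auto
    fix K assume K: "left_ideal K P \<and> M \<subseteq> K \<and> K \<noteq> carrier P"
    then have "\<one>\<^bsub>P\<^esub> \<notin> K" using P.left_ideal_one by blast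
    then have "K \<in> A" unfolding A_def using K wM by blast
    then show "K = M" using Mmax K by blast
  qed
  then have zM: "monom P y 0 \<in> M" using zJ unfolding jacobson_radical_def by blast
  have "monom P \<one> 1 \<otimes>\<^bsub>P\<^esub> monom P y 0 = monom P y 1"
    using monom_mult[of "\<one>" y 1 0] y by simp
  then have "monom P y 1 \<in> M" using P.left_idealD(5)[OF LM _ zM] by (metis R.one_closed monom_closed)
  then have "w \<oplus>\<^bsub>P\<^esub> monom P y 1 \<in> M" using P.left_idealD(3)[OF LM wM] by blast
  moreover have "w \<oplus>\<^bsub>P\<^esub> monom P y 1 = \<one>\<^bsub>P\<^esub>" unfolding w_def using y
    by (simp add: P.minus_eq P.a_assoc P.l_neg)
  ultimately show False using oM by simp
qed

lemma UP_not_NJ: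
  assumes abc: "a \<in> carrier R" "b \<in> carrier R" "c \<in> carrier R" and z: "a \<otimes> b \<otimes> c = \<zero>"
    and ny: "\<And>n::nat. (b \<otimes> a \<otimes> c) [^] n \<noteq> \<zero>"
  shows "\<not> NJ_symmetric P"
proof
  assume NJ: "NJ_symmetric P"
  have e1: "monom P a 0 \<otimes>\<^bsub>P\<^esub> monom P b 0 \<otimes>\<^bsub>P\<^esub> monom P c 0 = monom P (a \<otimes> b \<otimes> c) 0"
    using monom_mult[of a b 0 0] monom_mult[of "a \<otimes> b" c 0 0] abc by simp
  have e2: "monom P b 0 \<otimes>\<^bsub>P\<^esub> monom P a 0 \<otimes>\<^bsub>P\<^esub> monom P c 0 = monom P (b \<otimes> a \<otimes> c) 0"
    using monom_mult[of b a 0 0] monom_mult[of "b \<otimes> a" c 0 0] abc by simp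
  have "monom P (a \<otimes> b \<otimes> c) 0 \<in> nilpotents P" unfolding nilpotents_def z
    by (intro CollectI conjI exI[of _ "1::nat"]) auto
  then have "monom P (b \<otimes> a \<otimes> c) 0 \<in> jacobson_radical P"
    using NJ abc e1 e2 unfolding NJ_symmetric_def by (metis monom_closed)
  then show False using not_in_J[of "b \<otimes> a \<otimes> c"] ny abc by simp
qed

end

lemma main_generic:
  fixes R :: "('a, 'm) ring_scheme"
  assumes R: "ring R"
    and m: "m \<subseteq> carrier R" "\<one>\<^bsub>R\<^esub> \<notin> m" "\<zero>\<^bsub>R\<^esub> \<in> m"
    "\<And>x y. x \<in> m \<Longrightarrow> y \<in> m \<Longrightarrow> x \<oplus>\<^bsub>R\<^esub> y \<in> m"
    "\<And>x r. x \<in> m \<Longrightarrow> r \<in> carrier R \<Longrightarrow> r \<otimes>\<^bsub>R\<^esub> x \<in> m"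
    "\<And>x r. x \<in> m \<Longrightarrow> r \<in> carrier R \<Longrightarrow> x \<otimes>\<^bsub>R\<^esub> r \<in> m"
    "\<And>x. x \<in> carrier R \<Longrightarrow> x \<notin> m \<Longrightarrow> \<exists>u\<in>carrier R. u \<otimes>\<^bsub>R\<^esub> x = \<one>\<^bsub>R\<^esub>"
    "\<And>x y. x \<in> carrier R \<Longrightarrow> y \<in> carrier R \<Longrightarrow> x \<notin> m \<Longrightarrow> y \<notin> m \<Longrightarrow> x \<otimes>\<^bsub>R\<^esub> y \<notin> m"
    and abc: "a \<in> carrier R" "b \<in> carrier R" "c \<in> carrier R" and z: "a \<otimes>\<^bsub>R\<^esub> b \<otimes>\<^bsub>R\<^esub> c = \<zero>\<^bsub>R\<^esub>"
    and ny: "\<And>n::nat. (b \<otimes>\<^bsub>R\<^esub> a \<otimes>\<^bsub>R\<^esub> c) [^]\<^bsub>R\<^esub> n \<noteq> \<zero>\<^bsub>R\<^esub>"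
  shows "NJ_symmetric R \<and> \<not> NJ_symmetric (UP R)"
proof
  show "NJ_symmetric R" using ring.NJ_from_m[OF R m] .
  interpret U: UP_ring R "UP R" by (rule UP_ring.intro[OF R])
  show "\<not> NJ_symmetric (UP R)" using U.UP_not_NJ[OF abc z ny] .
qed

definition AA :: "rat \<Rightarrow> bool" where "AA q \<longleftrightarrow> (\<exists>n d::int. odd d \<and> q = of_int n / of_int d)"
definition EE :: "rat \<Rightarrow> bool" where "EE q \<longleftrightarrow> (\<exists>n d::int. odd d \<and> q = of_int (2*n) / of_int d)"

lemma odd_nz: "odd (d::int) \<Longrightarrow> (of_int d :: rat) \<noteq> 0" by auto

lemma AA_add: "AA p \<Longrightarrow> AA q \<Longrightarrow> AA (p + q)"
  unfolding AA_def
proof (elim exE conjE)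
  fix n1 d1 n2 d2 :: int assume h: "odd d1" "p = of_int n1 / of_int d1" "odd d2" "q = of_int n2 / of_int d2"
  then have "p + q = of_int (n1*d2 + n2*d1) / of_int (d1*d2)" using odd_nz[of d1] odd_nz[of d2]
    by (simp add: field_simps)
  moreover have "odd (d1*d2)" using h by simp
  ultimately show "\<exists>n d::int. odd d \<and> p + q = of_int n / of_int d" by blast
qed

lemma AA_mult: "AA p \<Longrightarrow> AA q \<Longrightarrow> AA (p * q)"
  unfolding AA_def
proof (elim exE conjE)
  fix n1 d1 n2 d2 :: int assume h: "odd d1" "p = of_int n1 / of_int d1" "odd d2" "q = of_int n2 / of_int d2"
  then have "p * q = of_int (n1*n2) / of_int (d1*d2)" by simp
  moreover have "odd (d1*d2)" using h by simp
  ultimately show "\<exists>n d::int. odd d \<and> p * q = of_int n / of_int d" by blast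
qed

lemma AA_neg: "AA p \<Longrightarrow> AA (- p)"
  unfolding AA_def by (metis minus_divide_left of_int_minus)

lemma AA_0: "AA 0" unfolding AA_def by (rule exI[of _ 0], rule exI[of _ 1]) simp
lemma AA_1: "AA 1" unfolding AA_def by (rule exI[of _ 1], rule exI[of _ 1]) simp

lemma EE_AA: "EE p \<Longrightarrow> AA p" unfolding EE_def AA_def by blast

lemma EE_iff: "EE p \<longleftrightarrow> AA (p / 2)"
proof
  assume "EE p" then obtain n d :: int where "odd d" "p = of_int (2*n) / of_int d" unfolding EE_def by blast
  then show "AA (p/2)" unfolding AA_def by (intro exI[of _ n] exI[of _ d]) simp
next
  assume "AA (p/2)" then obtain n d :: int where "odd d" "p/2 = of_int n / of_int d" unfolding AA_def by blast
  then have "p = of_int (2*n) / of_int d" by (simp add: field_simps)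
  then show "EE p" unfolding EE_def using \<open>odd d\<close> by blast
qed

lemma EE_add: "EE p \<Longrightarrow> EE q \<Longrightarrow> EE (p + q)"
  unfolding EE_iff using AA_add[of "p/2" "q/2"] by (simp add: add_divide_distrib)

lemma EE_neg: "EE p \<Longrightarrow> EE (- p)"
  unfolding EE_iff using AA_neg[of "p/2"] by simp

lemma EE_diff: "EE p \<Longrightarrow> EE q \<Longrightarrow> EE (p - q)"
  using EE_add[OF _ EE_neg[of q]] by simp

lemma EE_mult1: "EE p \<Longrightarrow> AA q \<Longrightarrow> EE (p * q)"
  unfolding EE_iff using AA_mult[of "p/2" q] by simp

lemma EE_mult2: "AA p \<Longrightarrow> EE q \<Longrightarrow> EE (p * q)"
  using EE_mult1[of q p] by (simp add: mult.commute)

lemma EE_0: "EE 0" unfolding EE_iff by (simp add: AA_0)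
lemma EE_2: "EE 2" unfolding EE_iff by (simp add: AA_1)

lemma AA_notEE: assumes "AA q" "\<not> EE q" shows "\<exists>n d::int. odd n \<and> odd d \<and> q = of_int n / of_int d"
proof -
  obtain n d :: int where nd: "odd d" "q = of_int n / of_int d" using assms(1) unfolding AA_def by blast
  have "odd n"
  proof
    assume "even n" then obtain k where "n = 2 * k" by blast
    then have "EE q" unfolding EE_def using nd by blast
    then show False using assms(2) by simp
  qed
  then show ?thesis using nd by blast
qed

lemma not_EE_1: "\<not> EE 1"
proof
  assume "EE 1"
  then obtain n d :: int where nd: "odd d" "(1::rat) = of_int (2*n) / of_int d" unfolding EE_def by blast
  then have "(of_int d :: rat) = of_int (2*n)" using odd_nz[of d] by (simp add: field_simps)
  then have "d = 2 * n" by (simp only: of_int_eq_iff)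
  then show False using nd by simp
qed

lemma notEE_mult: assumes "AA p" "AA q" "\<not> EE p" "\<not> EE q" shows "\<not> EE (p * q)"
proof
  assume e: "EE (p*q)"
  obtain n1 d1 n2 d2 :: int where h: "odd n1" "odd d1" "p = of_int n1 / of_int d1"
     "odd n2" "odd d2" "q = of_int n2 / of_int d2" using AA_notEE assms by metis
  obtain k e :: int where ke: "odd e" "p * q = of_int (2*k) / of_int e" using e unfolding EE_def by blast
  have "(of_int (n1*n2*e) :: rat) = of_int (2*k*d1*d2)"
    using ke h odd_nz[of d1] odd_nz[of d2] odd_nz[of e] by (simp add: field_simps)
  then have "n1*n2*e = 2*k*d1*d2" by (simp only: of_int_eq_iff)
  then show False using h ke by (metis even_mult_iff odd_one mult.assoc dvd_triv_left)
qed

lemma AA_inv: assumes "AA q" "\<not> EE q" shows "AA (1 / q)" "q \<noteq> 0"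
proof -
  obtain n d :: int where h: "odd n" "odd d" "q = of_int n / of_int d" using AA_notEE assms by blast
  then have "1 / q = of_int d / of_int n" by simp
  then show "AA (1 / q)" unfolding AA_def using h by blast
  show "q \<noteq> 0" using assms EE_0 by auto
qed

lemma notEE_add: "EE p \<Longrightarrow> \<not> EE q \<Longrightarrow> \<not> EE (p + q)"
  using EE_diff[of "p + q" p] by auto


type_synonym q4 = "rat \<times> rat \<times> rat \<times> rat"

definition SS :: "q4 set" where
  "SS = {(a,b,c,d). AA a \<and> AA b \<and> EE c \<and> EE (a - d)}"

fun mm4 :: "q4 \<Rightarrow> q4 \<Rightarrow> q4" where
  "mm4 (a1,b1,c1,d1) (a2,b2,c2,d2) = (a1*a2+b1*c2, a1*b2+b1*d2, c1*a2+d1*c2, c1*b2+d1*d2)"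

fun ad4 :: "q4 \<Rightarrow> q4 \<Rightarrow> q4" where
  "ad4 (a1,b1,c1,d1) (a2,b2,c2,d2) = (a1+a2, b1+b2, c1+c2, d1+d2)"

definition R0 :: "q4 ring" where
  "R0 = \<lparr>carrier = SS, mult = mm4, one = (1,0,0,1), zero = (0,0,0,0), add = ad4\<rparr>"

lemma SS_iff: "(a,b,c,d) \<in> SS \<longleftrightarrow> AA a \<and> AA b \<and> EE c \<and> EE (a - d)"
  unfolding SS_def by simp

lemma SS_d: "(a,b,c,d) \<in> SS \<Longrightarrow> AA d"
proof -
  assume "(a,b,c,d) \<in> SS"
  then have "AA a" "EE (a - d)" by (auto simp: SS_iff)
  then have "AA (a + - (a - d))" using AA_add AA_neg EE_AA by blast
  then show ?thesis by simp
qed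

lemma SS_mult: assumes "x \<in> SS" "y \<in> SS" shows "mm4 x y \<in> SS"
proof -
  obtain a1 b1 c1 d1 a2 b2 c2 d2 where xy: "x = (a1,b1,c1,d1)" "y = (a2,b2,c2,d2)"
    by (cases x, cases y) auto
  have h: "AA a1" "AA b1" "EE c1" "EE (a1 - d1)" "AA a2" "AA b2" "EE c2" "EE (a2 - d2)"
    using assms xy by (auto simp: SS_iff)
  have hd: "AA d1" "AA d2" using assms xy SS_d by auto
  have "AA (a1*a2+b1*c2)" by (intro AA_add AA_mult h EE_AA)
  moreover have "AA (a1*b2+b1*d2)" by (intro AA_add AA_mult h hd)
  moreover have "EE (c1*a2+d1*c2)" by (intro EE_add EE_mult1 EE_mult2 h hd)
  moreover have "EE ((a1*a2+b1*c2) - (c1*b2+d1*d2))"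
  proof -
    have eq: "(a1*a2+b1*c2) - (c1*b2+d1*d2) = (a1*(a2-d2) + (a1-d1)*d2) + (b1*c2 - c1*b2)"
      by (simp add: algebra_simps)
    show ?thesis unfolding eq by (intro EE_add EE_diff EE_mult1 EE_mult2 h hd)
  qed
  ultimately show ?thesis using xy by (simp add: SS_iff)
qed

lemma SS_add: assumes "x \<in> SS" "y \<in> SS" shows "ad4 x y \<in> SS"
proof -
  obtain a1 b1 c1 d1 a2 b2 c2 d2 where xy: "x = (a1,b1,c1,d1)" "y = (a2,b2,c2,d2)"
    by (cases x, cases y) auto
  have h: "AA a1" "AA b1" "EE c1" "EE (a1 - d1)" "AA a2" "AA b2" "EE c2" "EE (a2 - d2)"
    using assms xy by (auto simp: SS_iff)
  have eq: "a1 + a2 - (d1 + d2) = (a1 - d1) + (a2 - d2)" by simp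
  have "EE (a1 + a2 - (d1 + d2))" unfolding eq by (rule EE_add[OF h(4) h(8)])
  then show ?thesis using xy h by (simp add: SS_iff AA_add EE_add)
qed

lemma SS_neg: assumes "x \<in> SS" shows "\<exists>y\<in>SS. ad4 y x = (0,0,0,0)"
proof -
  obtain a b c d where x: "x = (a,b,c,d)" by (cases x) auto
  have h: "AA a" "AA b" "EE c" "EE (a - d)" using assms x by (auto simp: SS_iff)
  have "-a - -d = - (a - d)" by simp
  moreover have "EE (- (a - d))" using h EE_neg by blast
  ultimately have "(-a,-b,-c,-d) \<in> SS" using h by (simp add: SS_iff AA_neg EE_neg)
  then show ?thesis using x by (intro bexI[of _ "(-a,-b,-c,-d)"]) auto
qed

lemma ad4_assoc: "ad4 (ad4 x y) z = ad4 x (ad4 y z)"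
  by (cases x; cases y; cases z) (simp add: algebra_simps)
lemma ad4_comm: "ad4 x y = ad4 y x"
  by (cases x; cases y) (simp add: algebra_simps)
lemma ad4_zero: "ad4 (0,0,0,0) x = x"
  by (cases x) simp
lemma mm4_assoc: "mm4 (mm4 x y) z = mm4 x (mm4 y z)"
  by (cases x; cases y; cases z) (simp add: algebra_simps)
lemma mm4_one: "mm4 (1,0,0,1) x = x" "mm4 x (1,0,0,1) = x"
  by (cases x; simp)+
lemma mm4_ldistr: "mm4 (ad4 x y) z = ad4 (mm4 x z) (mm4 y z)"
  by (cases x; cases y; cases z) (simp add: algebra_simps)
lemma mm4_rdistr: "mm4 z (ad4 x y) = ad4 (mm4 z x) (mm4 z y)"
  by (cases x; cases y; cases z) (simp add: algebra_simps)
lemma SS_zero: "(0,0,0,0) \<in> SS" by (simp add: SS_iff AA_0 EE_0)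
lemma SS_one: "(1,0,0,1) \<in> SS" by (simp add: SS_iff AA_0 AA_1 EE_0)

lemma ring_R0: "ring R0"
proof (rule ringI)
  show "abelian_group R0"
    apply (rule abelian_groupI)
    apply (simp_all add: R0_def SS_add SS_neg SS_zero ad4_zero)
    apply (simp add: ad4_assoc)
    apply (metis ad4_comm)
    done
  show "monoid R0"
    by (rule monoidI) (simp_all add: R0_def SS_mult SS_one mm4_assoc mm4_one)
qed (simp_all add: R0_def mm4_ldistr mm4_rdistr)


definition m0 :: "q4 set" where "m0 = {x \<in> SS. EE (fst x)}"

lemma R0_m_props:
  shows "m0 \<subseteq> carrier R0" "\<one>\<^bsub>R0\<^esub> \<notin> m0" "\<zero>\<^bsub>R0\<^esub> \<in> m0"
    "\<And>x y. x \<in> m0 \<Longrightarrow> y \<in> m0 \<Longrightarrow> x \<oplus>\<^bsub>R0\<^esub> y \<in> m0"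
    "\<And>x r. x \<in> m0 \<Longrightarrow> r \<in> carrier R0 \<Longrightarrow> r \<otimes>\<^bsub>R0\<^esub> x \<in> m0"
    "\<And>x r. x \<in> m0 \<Longrightarrow> r \<in> carrier R0 \<Longrightarrow> x \<otimes>\<^bsub>R0\<^esub> r \<in> m0"
    "\<And>x. x \<in> carrier R0 \<Longrightarrow> x \<notin> m0 \<Longrightarrow> \<exists>u\<in>carrier R0. u \<otimes>\<^bsub>R0\<^esub> x = \<one>\<^bsub>R0\<^esub>"
    "\<And>x y. x \<in> carrier R0 \<Longrightarrow> y \<in> carrier R0 \<Longrightarrow> x \<notin> m0 \<Longrightarrow> y \<notin> m0 \<Longrightarrow> x \<otimes>\<^bsub>R0\<^esub> y \<notin> m0"
proof -
  show "m0 \<subseteq> carrier R0" unfolding m0_def R0_def by auto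
  show "\<one>\<^bsub>R0\<^esub> \<notin> m0" unfolding m0_def R0_def using not_EE_1 by simp
  show "\<zero>\<^bsub>R0\<^esub> \<in> m0" unfolding m0_def R0_def using SS_zero EE_0 by simp
  fix x y assume xy: "x \<in> m0" "y \<in> m0"
  then have "ad4 x y \<in> SS" using SS_add unfolding m0_def by auto
  moreover have "EE (fst (ad4 x y))" using xy unfolding m0_def
    by (cases x, cases y) (auto simp: EE_add)
  ultimately show "x \<oplus>\<^bsub>R0\<^esub> y \<in> m0" unfolding m0_def R0_def by simp
next
  fix x r assume x: "x \<in> m0" and r: "r \<in> carrier R0"
  obtain a b c d a' b' c' d' where xr: "x = (a,b,c,d)" "r = (a',b',c',d')" by (cases x, cases r) auto
  have xS: "(a,b,c,d) \<in> SS" "EE a" using x xr unfolding m0_def by auto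
  have rS: "(a',b',c',d') \<in> SS" using r xr unfolding R0_def by simp
  have h: "AA a" "AA b" "EE c" "EE a" "AA a'" "AA b'" "EE c'"
    using xS rS unfolding SS_iff by auto
  have rx: "r \<otimes>\<^bsub>R0\<^esub> x \<in> SS" "x \<otimes>\<^bsub>R0\<^esub> r \<in> SS" using xS(1) rS SS_mult xr unfolding R0_def by auto
  have "EE (a'*a + b'*c)" by (intro EE_add EE_mult2 h)
  then show "r \<otimes>\<^bsub>R0\<^esub> x \<in> m0" using rx xr unfolding m0_def by (simp add: R0_def)
  have "EE (a*a' + b*c')" by (intro EE_add EE_mult1 EE_mult2 h)
  then show "x \<otimes>\<^bsub>R0\<^esub> r \<in> m0" using rx xr unfolding m0_def by (simp add: R0_def)
next
  fix x assume x: "x \<in> carrier R0" "x \<notin> m0"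
  obtain a b c d where xe: "x = (a,b,c,d)" by (cases x) auto
  have xS: "(a,b,c,d) \<in> SS" "\<not> EE a" using x xe unfolding m0_def R0_def by auto
  have h: "AA a" "AA b" "EE c" "EE (a - d)" "\<not> EE a" "AA d"
    using xS SS_d[OF xS(1)] unfolding SS_iff by auto
  have nd: "\<not> EE d"
  proof
    assume "EE d" then have "EE ((a - d) + d)" using h EE_add by blast
    then show False using h by simp
  qed
  define D where "D = a*d - b*c"
  have D1: "D = - (b*c) + a*d" unfolding D_def by simp
  have "\<not> EE (a*d)" using notEE_mult h nd by blast
  moreover have "EE (- (b*c))" by (intro EE_neg EE_mult2 h)
  ultimately have nD: "\<not> EE D" unfolding D1 using notEE_add by blast
  have AD: "AA D" unfolding D_def using h
    by (simp only: diff_conv_add_uminus) (intro AA_add AA_mult AA_neg EE_AA h)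
  have iD: "AA (1/D)" "D \<noteq> 0" using AA_inv[OF AD nD] by auto
  define u where "u = (d * (1/D), - b * (1/D), - c * (1/D), a * (1/D))"
  have eqd: "d * (1/D) - a * (1/D) = - (a - d) * (1/D)" by (simp add: diff_divide_distrib)
  have "u \<in> SS" unfolding u_def SS_iff eqd
    by (intro conjI AA_mult AA_neg EE_mult1 EE_neg h iD)
  moreover have "mm4 u x = (1,0,0,1)"
  proof -
    have f1: "(a*d - b*c) * (1/D) = 1" using iD(2) unfolding D_def[symmetric] by simp
    have "d * (1/D) * a + - b * (1/D) * c = (a*d - b*c) * (1/D)" by (simp add: algebra_simps)
    moreover have "d * (1/D) * b + - b * (1/D) * d = 0" by (simp add: algebra_simps)
    moreover have "- c * (1/D) * a + a * (1/D) * c = 0" by (simp add: algebra_simps)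
    moreover have "- c * (1/D) * b + a * (1/D) * d = (a*d - b*c) * (1/D)" by (simp add: algebra_simps)
    ultimately show ?thesis unfolding u_def xe using f1 by simp
  qed
  ultimately show "\<exists>u\<in>carrier R0. u \<otimes>\<^bsub>R0\<^esub> x = \<one>\<^bsub>R0\<^esub>" unfolding R0_def by auto
next
  fix x y assume xy: "x \<in> carrier R0" "y \<in> carrier R0" "x \<notin> m0" "y \<notin> m0"
  obtain a b c d a' b' c' d' where e: "x = (a,b,c,d)" "y = (a',b',c',d')" by (cases x, cases y) auto
  have xS: "(a,b,c,d) \<in> SS" "\<not> EE a" "(a',b',c',d') \<in> SS" "\<not> EE a'"
    using xy e unfolding m0_def R0_def by auto
  have h: "AA a" "AA b" "\<not> EE a" "AA a'" "EE c'" "\<not> EE a'"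
    using xS unfolding SS_iff by auto
  have "\<not> EE (a*a')" using notEE_mult h by blast
  moreover have "EE (b*c')" by (intro EE_mult2 h)
  ultimately have "\<not> EE (b*c' + a*a')" using notEE_add by blast
  then show "x \<otimes>\<^bsub>R0\<^esub> y \<notin> m0" unfolding m0_def R0_def e by (simp add: add.commute)
qed

definition wa :: q4 where "wa = (0,1,0,0)"
definition wb :: q4 where "wb = (2,0,0,0)"
definition wc :: q4 where "wc = (0,0,2,0)"

lemma R0_wit:
  shows "wa \<in> carrier R0" "wb \<in> carrier R0" "wc \<in> carrier R0"
    "wa \<otimes>\<^bsub>R0\<^esub> wb \<otimes>\<^bsub>R0\<^esub> wc = \<zero>\<^bsub>R0\<^esub>"
    "\<And>n::nat. (wb \<otimes>\<^bsub>R0\<^esub> wa \<otimes>\<^bsub>R0\<^esub> wc) [^]\<^bsub>R0\<^esub> n \<noteq> \<zero>\<^bsub>R0\<^esub>"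
proof -
  show "wa \<in> carrier R0" "wb \<in> carrier R0" "wc \<in> carrier R0"
    unfolding wa_def wb_def wc_def R0_def using AA_0 AA_1 EE_0 EE_2 EE_AA[OF EE_2]
    by (auto simp: SS_iff)
  show "wa \<otimes>\<^bsub>R0\<^esub> wb \<otimes>\<^bsub>R0\<^esub> wc = \<zero>\<^bsub>R0\<^esub>" unfolding wa_def wb_def wc_def R0_def by simp
  have e: "wb \<otimes>\<^bsub>R0\<^esub> wa \<otimes>\<^bsub>R0\<^esub> wc = (4,0,0,0)" unfolding wa_def wb_def wc_def R0_def by simp
  have p: "(4::rat,0::rat,0::rat,0::rat) [^]\<^bsub>R0\<^esub> (Suc n) = (4 ^ Suc n, 0, 0, 0)" for n
    by (induction n) (simp_all add: R0_def)
  fix n :: nat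
  show "(wb \<otimes>\<^bsub>R0\<^esub> wa \<otimes>\<^bsub>R0\<^esub> wc) [^]\<^bsub>R0\<^esub> n \<noteq> \<zero>\<^bsub>R0\<^esub>"
    unfolding e by (cases n) (simp_all only: p, simp_all add: R0_def)
qed


definition imgn :: "'a::countable ring \<Rightarrow> nat ring" where
  "imgn R = \<lparr>carrier = to_nat ` carrier R,
     mult = (\<lambda>x y. to_nat (from_nat x \<otimes>\<^bsub>R\<^esub> from_nat y)),
     one = to_nat \<one>\<^bsub>R\<^esub>, zero = to_nat \<zero>\<^bsub>R\<^esub>,
     add = (\<lambda>x y. to_nat (from_nat x \<oplus>\<^bsub>R\<^esub> from_nat y))\<rparr>"

lemma imgn_simps:
  "carrier (imgn R) = to_nat ` carrier R"
  "to_nat x \<otimes>\<^bsub>imgn R\<^esub> to_nat y = to_nat (x \<otimes>\<^bsub>R\<^esub> y)"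
  "to_nat x \<oplus>\<^bsub>imgn R\<^esub> to_nat y = to_nat (x \<oplus>\<^bsub>R\<^esub> y)"
  "\<one>\<^bsub>imgn R\<^esub> = to_nat \<one>\<^bsub>R\<^esub>"
  "\<zero>\<^bsub>imgn R\<^esub> = to_nat \<zero>\<^bsub>R\<^esub>"
  by (simp_all add: imgn_def)

lemma imgn_pow: "to_nat x [^]\<^bsub>imgn R\<^esub> (n::nat) = to_nat (x [^]\<^bsub>R\<^esub> n)"
  by (induction n) (simp_all add: imgn_simps)

lemma imgn_ring: assumes R: "ring R" shows "ring (imgn R)"
proof -
  have h: "to_nat \<in> ring_hom R (imgn R)"
    unfolding ring_hom_def by (auto simp: imgn_simps)
  have "ring ((imgn R) \<lparr>carrier := to_nat ` carrier R, zero := to_nat \<zero>\<^bsub>R\<^esub>\<rparr>)"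
    using ring.ring_hom_imp_img_ring[OF R h] .
  moreover have "(imgn R) \<lparr>carrier := to_nat ` carrier R, zero := to_nat \<zero>\<^bsub>R\<^esub>\<rparr> = imgn R"
    by (simp add: imgn_def)
  ultimately show ?thesis by simp
qed

theorem theorem2p29:
  shows "\<exists>R :: nat ring. ring R \<and> NJ_symmetric R \<and> \<not> NJ_symmetric (UP R)"
proof (intro exI conjI)
  let ?R = "imgn R0" and ?m = "to_nat ` m0"
  note P = R0_m_props
  note W = R0_wit
  show "ring ?R" using imgn_ring[OF ring_R0] .
  have "NJ_symmetric ?R \<and> \<not> NJ_symmetric (UP ?R)"
  proof (rule main_generic[of ?R ?m "to_nat wa" "to_nat wb" "to_nat wc"])
    show "ring ?R" using imgn_ring[OF ring_R0] .
    show "?m \<subseteq> carrier ?R" using P(1) by (auto simp: imgn_simps)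
    show "\<one>\<^bsub>?R\<^esub> \<notin> ?m" using P(2) by (auto simp: imgn_simps)
    show "\<zero>\<^bsub>?R\<^esub> \<in> ?m" using P(3) by (auto simp: imgn_simps)
    show "x \<oplus>\<^bsub>?R\<^esub> y \<in> ?m" if "x \<in> ?m" "y \<in> ?m" for x y
      using that P(4) by (auto simp: imgn_simps)
    show "r \<otimes>\<^bsub>?R\<^esub> x \<in> ?m" if "x \<in> ?m" "r \<in> carrier ?R" for x r
      using that P(5) by (auto simp: imgn_simps)
    show "x \<otimes>\<^bsub>?R\<^esub> r \<in> ?m" if "x \<in> ?m" "r \<in> carrier ?R" for x r
      using that P(6) by (auto simp: imgn_simps)
    show "\<exists>u\<in>carrier ?R. u \<otimes>\<^bsub>?R\<^esub> x = \<one>\<^bsub>?R\<^esub>" if hx: "x \<in> carrier ?R" "x \<notin> ?m" for x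
    proof -
      obtain x0 where x0: "x = to_nat x0" "x0 \<in> carrier R0" using hx(1) unfolding imgn_simps by blast
      then have "x0 \<notin> m0" using hx by auto
      then obtain u where "u \<in> carrier R0" "u \<otimes>\<^bsub>R0\<^esub> x0 = \<one>\<^bsub>R0\<^esub>" using P(7) x0 by blast
      then show ?thesis using x0 by (intro bexI[of _ "to_nat u"]) (auto simp: imgn_simps)
    qed
    show "x \<otimes>\<^bsub>?R\<^esub> y \<notin> ?m" if hxy: "x \<in> carrier ?R" "y \<in> carrier ?R" "x \<notin> ?m" "y \<notin> ?m" for x y
    proof -
      obtain x0 y0 where e: "x = to_nat x0" "x0 \<in> carrier R0" "y = to_nat y0" "y0 \<in> carrier R0"
        using hxy(1,2) unfolding imgn_simps by blast
      then have "x0 \<notin> m0" "y0 \<notin> m0" using hxy by auto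
      then have "x0 \<otimes>\<^bsub>R0\<^esub> y0 \<notin> m0" using P(8) e by blast
      then show ?thesis using e by (auto simp: imgn_simps)
    qed
    show "to_nat wa \<in> carrier ?R" "to_nat wb \<in> carrier ?R" "to_nat wc \<in> carrier ?R"
      using W by (auto simp: imgn_simps)
    show "to_nat wa \<otimes>\<^bsub>?R\<^esub> to_nat wb \<otimes>\<^bsub>?R\<^esub> to_nat wc = \<zero>\<^bsub>?R\<^esub>"
      using W by (simp add: imgn_simps)
    show "(to_nat wb \<otimes>\<^bsub>?R\<^esub> to_nat wa \<otimes>\<^bsub>?R\<^esub> to_nat wc) [^]\<^bsub>?R\<^esub> n \<noteq> \<zero>\<^bsub>?R\<^esub>" for n :: nat
      using W(5)[of n] by (simp add: imgn_simps imgn_pow)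
  qed
  then show "NJ_symmetric ?R" "\<not> NJ_symmetric (UP ?R)" by auto
qed

end
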